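(* Let $\mathcal{M}$ be the family of $3$-graphs defined in the context. A $3$-graph $\mathcal{H}$ is $\mathcal{M}$-free if and only if it is $\mathcal{M}$-hom-free.
   Context: A $3$-graph is a $3$-uniform hypergraph; $\mathcal{F}$-free means containing no member of $\mathcal{F}$ as a subgraph; "contained in" means isomorphic to a subgraph of. A map $f:V(F)\to V(\mathcal{H})$ is a homomorphism if $f(E)\in\mathcal{H}$ for every $E\in F$ (in particular $f$ is injective on each edge). $\mathcal{H}$ is $F$-hom-free if there is no homomorphism from $F$ to $\mathcal{H}$, and $\mathcal{F}$-hom-free if it is $F$-hom-free for all $F\in\mathcal{F}$. Transversal number $\tau(\mathcal{H})$: minimum size of a vertex set meeting every edge ($0$ if no edges). For $\ell\ge3$, $\mathcal{K}^3_{\ell+1}$: all $3$-graphs $F$ on at most $(\ell+1)+\binom{\ell+1}{2}$ vertices having an $(\ell+1)$-set $S$ (a core) every pair of which lies in an edge of $F$. Blowup of a $3$-graph $\mathcal{T}$ on $[s]$: replace vertex $i$ by a set of size $t_i\ge1$ (pairwise disjoint), each edge by the complete $3$-partite $3$-graph on the corresponding sets. $\mathcal{G}^1_n$: disjoint $A,B$, $|A|=\lfloor n/3\rfloor$, $|B|=\lceil 2n/3\rceil$, edges $\{a,b,b'\}$ with $a\in A$, $\{b,b'\}\subseteq B$. $\mathcal{G}^2_6$: all triples of $[6]$ except $\{1,2,3\},\{1,2,6\},\{3,4,5\},\{4,5,6\}$; for $n>6$, $\mathcal{G}^2_n$ is a blowup of $\mathcal{G}^2_6$ on $n$ vertices with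 maximum number of edges. $\mathcal{M}=M_1\cup M_2\cup M_3$ with $M_1=\{K_5^{3-}\}$ (complete $3$-graph on $5$ vertices minus an edge), $M_2$ = all $F\in\mathcal{K}^3_7$ with a core $S$ such that $\tau(F[S])\ge2$, $M_3$ = all $F\in\mathcal{K}^3_6$ not contained in $\mathcal{G}^1_n$ for any $n\ge1$ and not contained in $\mathcal{G}^2_n$ for any $n\ge6$. *)

theory Defs
  imports Main
begin

definition hg3 :: "'a set \<Rightarrow> 'a set set \<Rightarrow> bool" where
  "hg3 V E \<longleftrightarrow> finite V \<and> (\<forall>e\<in>E. e \<subseteq> V \<and> card e = 3)"

text \<open>Homomorphism F -> H (injectivity on edges is automatic since edges of H are 3-sets).\<close>
definition hom_map :: "'a set \<Rightarrow> 'a set set \<Rightarrow> 'b set \<Rightarrow> 'b set set \<Rightarrow> ('a \<Rightarrow> 'b) \<Rightarrow> bool" where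
  "hom_map VF EF VH EH f \<longleftrightarrow> f ` VF \<subseteq> VH \<and> (\<forall>e\<in>EF. f ` e \<in> EH)"

definition contained :: "'a set \<Rightarrow> 'a set set \<Rightarrow> 'b set \<Rightarrow> 'b set set \<Rightarrow> bool" where
  "contained VF EF VH EH \<longleftrightarrow> (\<exists>f. inj_on f VF \<and> hom_map VF EF VH EH f)"

definition transversal_number :: "'a set \<Rightarrow> 'a set set \<Rightarrow> nat" where
  "transversal_number V E = Min {card T | T. T \<subseteq> V \<and> (\<forall>e\<in>E. T \<inter> e \<noteq> {})}"

definition induced_edges :: "'a set set \<Rightarrow> 'a set \<Rightarrow> 'a set set" where
  "induced_edges E S = {e \<in> E. e \<subseteq> S}"

definition is_core :: "'a set \<Rightarrow> 'a set set \<Rightarrow> nat \<Rightarrow> 'a set \<Rightarrow> bool" where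
  "is_core V E k S \<longleftrightarrow> S \<subseteq> V \<and> card S = k \<and>
     (\<forall>x\<in>S. \<forall>y\<in>S. x \<noteq> y \<longrightarrow> (\<exists>e\<in>E. x \<in> e \<and> y \<in> e))"

text \<open>Membership in the family K^3_k (k = l+1).\<close>
definition inK :: "nat \<Rightarrow> 'a set \<Rightarrow> 'a set set \<Rightarrow> bool" where
  "inK k V E \<longleftrightarrow> hg3 V E \<and> card V \<le> k + (k choose 2) \<and> (\<exists>S. is_core V E k S)"

definition is_K5minus :: "'a set \<Rightarrow> 'a set set \<Rightarrow> bool" where
  "is_K5minus V E \<longleftrightarrow> hg3 V E \<and> card V = 5 \<and>
     (\<exists>t. t \<subseteq> V \<and> card t = 3 \<and> E = {e. e \<subseteq> V \<and> card e = 3} - {t})"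

text \<open>G^1_n on vertex set {0..<n}: A = {0..<n div 3}, B = {n div 3..<n}.\<close>
definition G1V :: "nat \<Rightarrow> nat set" where
  "G1V n = {0..<n}"

definition G1E :: "nat \<Rightarrow> nat set set" where
  "G1E n = {{a, b, b'} | a b b'. a < n div 3 \<and> n div 3 \<le> b \<and> b < n \<and>
                                 n div 3 \<le> b' \<and> b' < n \<and> b \<noteq> b'}"

definition G26E :: "nat set set" where
  "G26E = {e. e \<subseteq> {1..6} \<and> card e = 3} - {{1,2,3}, {1,2,6}, {3,4,5}, {4,5,6}}"

definition blowV :: "(nat \<Rightarrow> nat) \<Rightarrow> (nat \<times> nat) set" where
  "blowV t = {(i, j). i \<in> {1..6} \<and> j < t i}"

definition blowE :: "(nat \<Rightarrow> nat) \<Rightarrow> (nat \<times> nat) set set" where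
  "blowE t = {{(i1, j1), (i2, j2), (i3, j3)} | i1 j1 i2 j2 i3 j3.
               {i1, i2, i3} \<in> G26E \<and> j1 < t i1 \<and> j2 < t i2 \<and> j3 < t i3}"

definition valid_sizes :: "(nat \<Rightarrow> nat) \<Rightarrow> nat \<Rightarrow> bool" where
  "valid_sizes t n \<longleftrightarrow> (\<forall>i\<in>{1..6}. t i \<ge> 1) \<and> (\<Sum>i\<in>{1..6}. t i) = n"

definition is_G2 :: "nat \<Rightarrow> (nat \<times> nat) set \<Rightarrow> (nat \<times> nat) set set \<Rightarrow> bool" where
  "is_G2 n V E \<longleftrightarrow> (\<exists>t. valid_sizes t n \<and> V = blowV t \<and> E = blowE t \<and>
      (\<forall>t'. valid_sizes t' n \<longrightarrow> card (blowE t') \<le> card (blowE t)))"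

definition calM1 :: "(nat set \<times> nat set set) set" where
  "calM1 = {(V, E). is_K5minus V E}"

definition calM2 :: "(nat set \<times> nat set set) set" where
  "calM2 = {(V, E). inK 7 V E \<and>
      (\<exists>S. is_core V E 7 S \<and> transversal_number S (induced_edges E S) \<ge> 2)}"

definition calM3 :: "(nat set \<times> nat set set) set" where
  "calM3 = {(V, E). inK 6 V E \<and>
      \<not> (\<exists>n\<ge>1. contained V E (G1V n) (G1E n)) \<and>
      \<not> (\<exists>n\<ge>6. \<exists>GV GE. is_G2 n GV GE \<and> contained V E GV GE)}"

definition calM :: "(nat set \<times> nat set set) set" where
  "calM = calM1 \<union> calM2 \<union> calM3"

definition family_free :: "(nat set \<times> nat set set) set \<Rightarrow> 'a set \<Rightarrow> 'a set set \<Rightarrow> bool" where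
  "family_free FF V E \<longleftrightarrow> (\<forall>(VF, EF)\<in>FF. \<not> contained VF EF V E)"

definition family_hom_free :: "(nat set \<times> nat set set) set \<Rightarrow> 'a set \<Rightarrow> 'a set set \<Rightarrow> bool" where
  "family_hom_free FF V E \<longleftrightarrow> (\<forall>(VF, EF)\<in>FF. \<not> (\<exists>f. hom_map VF EF V E f))"

end

theory Submission
  imports Defs
begin
definition Miss :: "(nat \<times> nat \<times> nat) set" where
  "Miss = {(1,2,3),(1,2,6),(3,4,5),(4,5,6)}"
lemma sorted3:
  fixes x y z x' y' z' :: nat
  assumes "x<y" "y<z" "x'<y'" "y'<z'" "{x,y,z} = {x',y',z'}"
  shows "x=x' \<and> y=y' \<and> z=z'"
proof -
  have "x \<in> {x',y',z'}" "y \<in> {x',y',z'}" "z \<in> {x',y',z'}"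
       "x' \<in> {x,y,z}" "y' \<in> {x,y,z}" "z' \<in> {x,y,z}" using assms(5) by blast+
  then show ?thesis using assms(1-4) by auto
qed
lemma missing_iff:
  fixes a b c :: nat
  assumes "a<b" "b<c"
  shows "{a,b,c} \<in> {{1,2,3}, {1,2,6}, {3,4,5}, {4,5,6}} \<longleftrightarrow> (a,b,c) \<in> Miss"
proof
  assume "{a,b,c} \<in> {{1,2,3}, {1,2,6}, {3,4,5}, {4,5,6}}"
  then show "(a,b,c) \<in> Miss"
  proof (elim insertE emptyE)
    assume "{a,b,c} = {1,2,3}" from sorted3[OF assms _ _ this] show "(a,b,c) \<in> Miss" by (simp add: Miss_def)
  next
    assume "{a,b,c} = {1,2,6}" from sorted3[OF assms _ _ this] show "(a,b,c) \<in> Miss" by (simp add: Miss_def)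
  next
    assume "{a,b,c} = {3,4,5}" from sorted3[OF assms _ _ this] show "(a,b,c) \<in> Miss" by (simp add: Miss_def)
  next
    assume "{a,b,c} = {4,5,6}" from sorted3[OF assms _ _ this] show "(a,b,c) \<in> Miss" by (simp add: Miss_def)
  qed
next
  assume "(a,b,c) \<in> Miss" then show "{a,b,c} \<in> {{1,2,3}, {1,2,6}, {3,4,5}, {4,5,6}}"
    unfolding Miss_def by (elim insertE emptyE) (simp_all only: prod.inject insert_iff simp_thms)
qed
definition L26 :: "(nat \<times> nat \<times> nat) list" where
  "L26 = [(1,2,4),(1,2,5),(1,3,4),(1,3,5),(1,3,6),(1,4,5),(1,4,6),(1,5,6),(2,3,4),(2,3,5),(2,3,6),(2,4,5),(2,4,6),(2,5,6),(3,4,6),(3,5,6)]"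

lemma L26_props: "(a,b,c) \<in> set L26 \<Longrightarrow> 1 \<le> a \<and> a < b \<and> b < c \<and> c \<le> 6 \<and> (a,b,c) \<notin> Miss"
  unfolding L26_def Miss_def by (simp only: set_simps insert_iff empty_iff) (elim disjE; simp)

lemma L26_complete:
  fixes x y z :: nat
  assumes "1\<le>x" "x<y" "y<z" "z\<le>6" "(x,y,z) \<notin> Miss"
  shows "(x,y,z) \<in> set L26"
proof -
  have "x=1\<or>x=2\<or>x=3\<or>x=4" "y=2\<or>y=3\<or>y=4\<or>y=5" "z=3\<or>z=4\<or>z=5\<or>z=6" using assms(1-4) by arith+
  then show ?thesis using assms unfolding L26_def Miss_def by (elim disjE; simp)
qed
lemma card3_sorted:
  fixes e :: "nat set"
  assumes "card e = 3"
  obtains x y z where "e = {x,y,z}" "x<y" "y<z"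
proof -
  have fin: "finite e" using assms card.infinite by fastforce
  define xs where "xs = sorted_list_of_set e"
  have len: "length xs = 3" using assms fin by (simp add: xs_def)
  have st: "sorted_wrt (<) xs" by (simp add: xs_def)
  have se: "set xs = e" using fin by (simp add: xs_def)
  have "\<exists>x y z. xs = [x,y,z]" using len
    by (cases xs; cases "tl xs"; cases "tl (tl xs)"; simp add: numeral_3_eq_3)
  then obtain x y z where "xs = [x,y,z]" by blast
  then show ?thesis using that st se by auto
qed

lemma G26E_char: "G26E = (\<lambda>(a,b,c). {a,b,c}) ` set L26"
proof (rule set_eqI, rule iffI)
  fix e assume "e \<in> G26E"
  then have s: "e \<subseteq> {1..6}" and c: "card e = 3" and n: "e \<notin> {{1,2,3}, {1,2,6}, {3,4,5}, {4,5,6}}"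
    unfolding G26E_def by blast+
  obtain x y z where e: "e = {x,y,z}" "x<y" "y<z" using card3_sorted[OF c] by blast
  have "(x,y,z) \<notin> Miss" using missing_iff[OF e(2,3)] n unfolding e(1) by blast
  moreover have "1 \<le> x" "z \<le> 6" using s unfolding e(1) by auto
  ultimately have "(x,y,z) \<in> set L26" using L26_complete e(2,3) by blast
  then show "e \<in> (\<lambda>(a,b,c). {a,b,c}) ` set L26" unfolding e(1) by (rule rev_image_eqI) simp
next
  fix e assume "e \<in> (\<lambda>(a,b,c). {a,b,c}) ` set L26"
  then obtain a b c where e: "e = {a,b,c}" and m: "(a,b,c) \<in> set L26" by auto
  note p = L26_props[OF m]
  have "card e = 3" unfolding e using p by simp
  moreover have "e \<subseteq> {1..6}" unfolding e using p by simp
  moreover have "e \<notin> {{1,2,3}, {1,2,6}, {3,4,5}, {4,5,6}}" unfolding e using missing_iff[of a b c] p by blast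
  ultimately show "e \<in> G26E" unfolding G26E_def by blast
qed

definition Bl :: "(nat \<Rightarrow> nat) \<Rightarrow> nat \<Rightarrow> nat \<Rightarrow> nat \<Rightarrow> (nat \<times> nat) set set" where
  "Bl t a b c = (\<lambda>(j1,j2,j3). {(a,j1),(b,j2),(c,j3)}) ` ({..<t a} \<times> {..<t b} \<times> {..<t c})"

lemma triple_inj:
  assumes "a \<noteq> b" "a \<noteq> c" "b \<noteq> c"
    and eq: "{(a,j1),(b,j2),(c,j3)} = {(a,k1),(b,k2),(c,k3)}"
  shows "j1 = k1 \<and> j2 = k2 \<and> j3 = k3"
proof -
    have "(a,j1) \<in> {(a,k1),(b,k2),(c,k3)}" "(b,j2) \<in> {(a,k1),(b,k2),(c,k3)}" "(c,j3) \<in> {(a,k1),(b,k2),(c,k3)}"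
      by (simp_all only: eq[symmetric] insert_iff simp_thms)
    then show "j1 = k1 \<and> j2 = k2 \<and> j3 = k3" using assms(1-3) by simp
qed

lemma card_Bl:
  assumes "a \<noteq> b" "a \<noteq> c" "b \<noteq> c"
  shows "card (Bl t a b c) = t a * t b * t c"
proof -
  have "inj_on (\<lambda>(j1,j2,j3). {(a,j1),(b,j2),(c,j3)}) ({..<t a} \<times> {..<t b} \<times> {..<t c})"
    by (rule inj_onI) (auto dest: triple_inj[OF assms])
  then have "card (Bl t a b c) = card ({..<t a} \<times> {..<t b} \<times> {..<t c})" unfolding Bl_def by (rule card_image)
  then show ?thesis by (simp add: card_cartesian_product)
qed
lemma Bl_mem:
  fixes a b c :: nat
  assumes abc: "a<b" "b<c" and eq: "{i1,i2,i3} = {a,b,c}" and j: "j1 < t i1" "j2 < t i2" "j3 < t i3"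
  shows "{(i1,j1),(i2,j2),(i3,j3)} \<in> Bl t a b c"
proof -
  have key: "{(p,jp),(q,jq),(r,jr)} \<in> Bl t a b c"
    if "p<q" "q<r" "{p,q,r}={a,b,c}" "jp < t p" "jq < t q" "jr < t r" for p q r jp jq jr
  proof -
    have "p=a \<and> q=b \<and> r=c" using sorted3[OF that(1,2) abc that(3)] .
    then show ?thesis using that(4-6) unfolding Bl_def by (auto intro!: rev_image_eqI[of "(jp,jq,jr)"])
  qed
  have d: "card {i1,i2,i3} = 3" using eq abc by simp
  then have "i1 \<noteq> i2" "i1 \<noteq> i3" "i2 \<noteq> i3" by (auto simp: card_insert_if split: if_splits)
  then consider "i1<i2" "i2<i3" | "i1<i3" "i3<i2" | "i2<i1" "i1<i3" | "i2<i3" "i3<i1" | "i3<i1" "i1<i2" | "i3<i2" "i2<i1"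
    by linarith
  then show ?thesis
  proof cases
    case 1 then show ?thesis using key eq j by blast
  next
    case 2
    have "{(i1,j1),(i2,j2),(i3,j3)} = {(i1,j1),(i3,j3),(i2,j2)}" by blast
    moreover have "{i1,i3,i2} = {a,b,c}" unfolding eq[symmetric] by blast
    ultimately show ?thesis using key 2 j by metis
  next
    case 3
    have "{(i1,j1),(i2,j2),(i3,j3)} = {(i2,j2),(i1,j1),(i3,j3)}" by blast
    moreover have "{i2,i1,i3} = {a,b,c}" unfolding eq[symmetric] by blast
    ultimately show ?thesis using key 3 j by metis
  next
    case 4
    have "{(i1,j1),(i2,j2),(i3,j3)} = {(i2,j2),(i3,j3),(i1,j1)}" by blast
    moreover have "{i2,i3,i1} = {a,b,c}" unfolding eq[symmetric] by blast
    ultimately show ?thesis using key 4 j by metis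
  next
    case 5
    have "{(i1,j1),(i2,j2),(i3,j3)} = {(i3,j3),(i1,j1),(i2,j2)}" by blast
    moreover have "{i3,i1,i2} = {a,b,c}" unfolding eq[symmetric] by blast
    ultimately show ?thesis using key 5 j by metis
  next
    case 6
    have "{(i1,j1),(i2,j2),(i3,j3)} = {(i3,j3),(i2,j2),(i1,j1)}" by blast
    moreover have "{i3,i2,i1} = {a,b,c}" unfolding eq[symmetric] by blast
    ultimately show ?thesis using key 6 j by metis
  qed
qed

lemma Bl_elem:
  assumes "X \<in> Bl t a b c"
  shows "\<exists>j1 j2 j3. X = {(a,j1),(b,j2),(c,j3)} \<and> j1 < t a \<and> j2 < t b \<and> j3 < t c"
  using assms unfolding Bl_def by force

lemma Bl_fst:
  assumes "X \<in> Bl t a b c"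
  shows "fst ` X = {a,b,c}"
  using Bl_elem[OF assms] by auto

lemma blowE_eq: "blowE t = (\<Union>(a,b,c)\<in>set L26. Bl t a b c)"
proof (rule set_eqI, rule iffI)
  fix X assume "X \<in> blowE t"
  then obtain i1 j1 i2 j2 i3 j3 where X: "X = {(i1,j1),(i2,j2),(i3,j3)}" and g: "{i1,i2,i3} \<in> G26E"
    and j: "j1 < t i1" "j2 < t i2" "j3 < t i3" unfolding blowE_def by blast
  from g obtain a b c where m: "(a,b,c) \<in> set L26" and eq: "{i1,i2,i3} = {a,b,c}"
    unfolding G26E_char by auto
  have "X \<in> Bl t a b c" using Bl_mem[OF _ _ eq j] L26_props[OF m] X by blast
  then show "X \<in> (\<Union>(a,b,c)\<in>set L26. Bl t a b c)" using m by blast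
next
  fix X assume "X \<in> (\<Union>(a,b,c)\<in>set L26. Bl t a b c)"
  then obtain a b c where m: "(a,b,c) \<in> set L26" and X: "X \<in> Bl t a b c" by blast
  then obtain j1 j2 j3 where X: "X = {(a,j1),(b,j2),(c,j3)}" and j: "j1 < t a" "j2 < t b" "j3 < t c"
    using Bl_elem by blast
  have "{a,b,c} \<in> G26E" unfolding G26E_char using m by force
  then show "X \<in> blowE t" unfolding blowE_def using X j by blast
qed

lemma L26_distinct: "distinct L26" by (simp add: L26_def)

lemma card_blowE: "card (blowE t) = (\<Sum>(a,b,c)\<leftarrow>L26. t a * t b * t c)"
proof -
  have disj: "Bl t a b c \<inter> Bl t a' b' c' = {}" if "(a,b,c) \<in> set L26" "(a',b',c') \<in> set L26" "(a,b,c) \<noteq> (a',b',c')"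
    for a b c a' b' c'
  proof (rule ccontr)
    assume "Bl t a b c \<inter> Bl t a' b' c' \<noteq> {}"
    then obtain X where "X \<in> Bl t a b c" "X \<in> Bl t a' b' c'" by blast
    then have "{a,b,c} = {a',b',c'}" using Bl_fst by metis
    then show False using sorted3[of a b c a' b' c'] L26_props[OF that(1)] L26_props[OF that(2)] that(3) by auto
  qed
  have fin: "finite (Bl t a b c)" for a b c unfolding Bl_def by simp
  have "card (blowE t) = card (\<Union>\<tau>\<in>set L26. case \<tau> of (a,b,c) \<Rightarrow> Bl t a b c)"
    unfolding blowE_eq by (simp add: case_prod_beta)
  also have "\<dots> = (\<Sum>\<tau>\<in>set L26. card (case \<tau> of (a,b,c) \<Rightarrow> Bl t a b c))"
  proof (rule card_UN_disjoint)
    show "finite (set L26)" by simp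
    show "\<forall>\<tau>\<in>set L26. finite (case \<tau> of (a,b,c) \<Rightarrow> Bl t a b c)" using fin by (simp split: prod.splits)
    show "\<forall>\<tau>\<in>set L26. \<forall>\<tau>'\<in>set L26. \<tau> \<noteq> \<tau>' \<longrightarrow>
       (case \<tau> of (a,b,c) \<Rightarrow> Bl t a b c) \<inter> (case \<tau>' of (a,b,c) \<Rightarrow> Bl t a b c) = {}"
    proof (intro ballI impI)
      fix \<tau> \<tau>' assume h: "\<tau> \<in> set L26" "\<tau>' \<in> set L26" "\<tau> \<noteq> \<tau>'"
      obtain a b c where 1: "\<tau> = (a,b,c)" by (cases \<tau>) auto
      obtain a' b' c' where 2: "\<tau>' = (a',b',c')" by (cases \<tau>') auto
      show "(case \<tau> of (a,b,c) \<Rightarrow> Bl t a b c) \<inter> (case \<tau>' of (a,b,c) \<Rightarrow> Bl t a b c) = {}"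
        using disj[of a b c a' b' c'] h unfolding 1 2 by simp
    qed
  qed
  also have "\<dots> = (\<Sum>(a,b,c)\<in>set L26. card (Bl t a b c))" by (simp add: case_prod_beta)
  also have "\<dots> = (\<Sum>(a,b,c)\<in>set L26. t a * t b * t c)"
    by (rule sum.cong) (auto simp: card_Bl dest!: L26_props)
  also have "\<dots> = (\<Sum>(a,b,c)\<leftarrow>L26. t a * t b * t c)"
    by (simp add: sum_list_distinct_conv_sum_set[OF L26_distinct])
  finally show ?thesis .
qed

lemma card_blowE_explicit: "card (blowE t) =
   t 1 * t 2 * t 4 + t 1 * t 2 * t 5 + t 1 * t 3 * t 4 + t 1 * t 3 * t 5 + t 1 * t 3 * t 6 + t 1 * t 4 * t 5
 + t 1 * t 4 * t 6 + t 1 * t 5 * t 6 + t 2 * t 3 * t 4 + t 2 * t 3 * t 5 + t 2 * t 3 * t 6 + t 2 * t 4 * t 5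
 + t 2 * t 4 * t 6 + t 2 * t 5 * t 6 + t 3 * t 4 * t 6 + t 3 * t 5 * t 6"
  unfolding card_blowE by (simp add: L26_def add.assoc)

lemma poly_ineq_int:
  fixes x1 x2 x3 x4 x5 x6 :: int
  assumes nn: "0 \<le> x1" "0 \<le> x2" "0 \<le> x3" "0 \<le> x4" "0 \<le> x5" "0 \<le> x6"
  shows "432 * (x1*x2*x4 + x1*x2*x5 + x1*x3*x4 + x1*x3*x5 + x1*x3*x6 + x1*x4*x5
 + x1*x4*x6 + x1*x5*x6 + x2*x3*x4 + x2*x3*x5 + x2*x3*x6 + x2*x4*x5
 + x2*x4*x6 + x2*x5*x6 + x3*x4*x6 + x3*x5*x6) \<le> 32 * (x1+x2+x3+x4+x5+x6)^3"
proof -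
  define P where "P = x1 + x2"
  define Q where "Q = x4 + x5"
  define R where "R = x3 + x6"
  define u where "u = P + Q"
  have P0: "0 \<le> P" and Q0: "0 \<le> Q" and R0: "0 \<le> R" and u0: "0 \<le> u"
    using nn by (simp_all add: P_def Q_def R_def u_def)
  have e: "x1*x2*x4 + x1*x2*x5 + x1*x3*x4 + x1*x3*x5 + x1*x3*x6 + x1*x4*x5
 + x1*x4*x6 + x1*x5*x6 + x2*x3*x4 + x2*x3*x5 + x2*x3*x6 + x2*x4*x5
 + x2*x4*x6 + x2*x5*x6 + x3*x4*x6 + x3*x5*x6 = P*Q*R + x1*x2*Q + x4*x5*P + x3*x6*u"
    unfolding P_def Q_def R_def u_def by (simp add: algebra_simps)
  have sq: "4*a*b \<le> (a+b)^2" for a b :: int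
  proof -
    have "(a+b)^2 - 4*a*b = (a-b)^2" by (simp add: power2_eq_square algebra_simps)
    moreover have "0 \<le> (a-b)^2" by simp
    ultimately show ?thesis by linarith
  qed
  have h1: "4*x1*x2*Q \<le> P^2*Q" unfolding P_def by (rule mult_right_mono[OF sq Q0])
  have h2: "4*x4*x5*P \<le> Q^2*P" unfolding Q_def by (rule mult_right_mono[OF sq P0])
  have h3: "4*x3*x6*u \<le> R^2*u" unfolding R_def by (rule mult_right_mono[OF sq u0])
  have "0 \<le> 4*R+u" using R0 u0 by simp
  then have h4: "4*P*Q*(4*R+u) \<le> u^2*(4*R+u)" unfolding u_def by (rule mult_right_mono[OF sq])
  have A: "16*(P*Q*R + x1*x2*Q + x4*x5*P + x3*x6*u) \<le> u^2*(4*R+u) + 4*R^2*u"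
  proof -
    have "16*(P*Q*R + x1*x2*Q + x4*x5*P + x3*x6*u) = (4*P*Q)*(4*R) + 4*(4*x1*x2*Q) + 4*(4*x4*x5*P) + 4*(4*x3*x6*u)"
      by (simp add: algebra_simps)
    also have "\<dots> \<le> (4*P*Q)*(4*R) + 4*(P^2*Q) + 4*(Q^2*P) + 4*(R^2*u)" using h1 h2 h3 by linarith
    also have "\<dots> = 4*P*Q*(4*R+u) + 4*R^2*u" unfolding u_def by (simp add: power2_eq_square algebra_simps)
    also have "\<dots> \<le> u^2*(4*R+u) + 4*R^2*u" using h4 by linarith
    finally show ?thesis .
  qed
  have B: "27*(u^2*(4*R+u) + 4*R^2*u) + (u-2*R)^2*(5*u+8*R) = 32*(u+R)^3"
    by (simp add: power2_eq_square power3_eq_cube algebra_simps)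
  have C: "0 \<le> (u-2*R)^2*(5*u+8*R)" using u0 R0 by simp
  have D: "u + R = x1+x2+x3+x4+x5+x6" unfolding u_def P_def Q_def R_def by simp
  have "432*(P*Q*R + x1*x2*Q + x4*x5*P + x3*x6*u) = 27*(16*(P*Q*R + x1*x2*Q + x4*x5*P + x3*x6*u))" by simp
  also have "\<dots> \<le> 27*(u^2*(4*R+u) + 4*R^2*u)" using A by (rule mult_left_mono) simp
  also have "\<dots> \<le> 32*(u+R)^3" using B C by linarith
  finally show ?thesis unfolding e D[symmetric] .
qed

lemma poly_ineq_nat:
  fixes x1 x2 x3 x4 x5 x6 s :: nat
  assumes "x1+x2+x3+x4+x5+x6 = 6*s"
  shows "x1*x2*x4 + x1*x2*x5 + x1*x3*x4 + x1*x3*x5 + x1*x3*x6 + x1*x4*x5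
 + x1*x4*x6 + x1*x5*x6 + x2*x3*x4 + x2*x3*x5 + x2*x3*x6 + x2*x4*x5
 + x2*x4*x6 + x2*x5*x6 + x3*x4*x6 + x3*x5*x6 \<le> 16*s^3" (is "?N \<le> _")
proof -
  have "432 * int ?N \<le> 32 * (int x1+int x2+int x3+int x4+int x5+int x6)^3"
    using poly_ineq_int[of "int x1" "int x2" "int x3" "int x4" "int x5" "int x6"] by simp
  also have "int x1+int x2+int x3+int x4+int x5+int x6 = 6 * int s" using assms by linarith
  also have "32 * (6 * int s)^3 = 432 * int (16*s^3)"
    by (simp add: power_mult_distrib)
  finally have X: "432 * int ?N \<le> 432 * int (16*s^3)" .
  have "int ?N \<le> int (16*s^3)" by (rule mult_left_le_imp_le[OF X]) simp
  then show ?thesis by (simp only: of_nat_le_iff)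
qed

lemma six_set: "{1..6::nat} = {1,2,3,4,5,6}" by auto

lemma G2_uniform:
  assumes "s \<ge> 1"
  shows "is_G2 (6*s) (blowV (\<lambda>_. s)) (blowE (\<lambda>_. s))"
  unfolding is_G2_def
proof (intro exI conjI allI impI)
  show "valid_sizes (\<lambda>_. s) (6*s)" using assms unfolding valid_sizes_def by simp
  show "blowV (\<lambda>_. s) = blowV (\<lambda>_. s)" ..
  show "blowE (\<lambda>_. s) = blowE (\<lambda>_. s)" ..
  fix t' assume "valid_sizes t' (6*s)"
  then have "t' 1 + t' 2 + t' 3 + t' 4 + t' 5 + t' 6 = 6*s" unfolding valid_sizes_def six_set by (simp add: add.assoc)
  then have "card (blowE t') \<le> 16*s^3" unfolding card_blowE_explicit by (rule poly_ineq_nat)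
  also have "16*s^3 = card (blowE (\<lambda>_. s))" unfolding card_blowE_explicit by (simp add: power3_eq_cube)
  finally show "card (blowE t') \<le> card (blowE (\<lambda>_. s))" .
qed

lemma G26E_card: "g \<in> G26E \<Longrightarrow> card g = 3 \<and> g \<subseteq> {1..6}"
  unfolding G26E_def by blast

lemma blowE_imp:
  assumes "X \<in> blowE t"
  shows "X \<subseteq> blowV t \<and> card X = 3 \<and> fst ` X \<in> G26E"
proof -
  obtain i1 j1 i2 j2 i3 j3 where X: "X = {(i1,j1),(i2,j2),(i3,j3)}" and g: "{i1,i2,i3} \<in> G26E"
    and j: "j1 < t i1" "j2 < t i2" "j3 < t i3" using assms unfolding blowE_def by blast
  note gc = G26E_card[OF g]
  then have d: "i1 \<noteq> i2" "i1 \<noteq> i3" "i2 \<noteq> i3" by (auto simp: card_insert_if split: if_splits)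
  have "X \<subseteq> blowV t" using gc j unfolding X blowV_def by auto
  moreover have "card X = 3" unfolding X using d by simp
  moreover have "fst ` X = {i1,i2,i3}" unfolding X by simp
  ultimately show ?thesis using g by simp
qed

lemma blowE_intro:
  assumes "X \<subseteq> blowV t" "card X = 3" "fst ` X \<in> G26E"
  shows "X \<in> blowE t"
proof -
  obtain p q r where X: "X = {p,q,r}" using assms(2) by (auto simp: card_3_iff)
  obtain i1 j1 where p: "p = (i1,j1)" by (cases p)
  obtain i2 j2 where q: "q = (i2,j2)" by (cases q)
  obtain i3 j3 where r: "r = (i3,j3)" by (cases r)
  have j: "j1 < t i1" "j2 < t i2" "j3 < t i3" using assms(1) unfolding X p q r blowV_def by auto
  have "{i1,i2,i3} \<in> G26E" using assms(3) unfolding X p q r by simp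
  then show ?thesis unfolding blowE_def X p q r using j by blast
qed

lemma hom_G2_contained:
  fixes VF :: "nat set"
  assumes hF: "hg3 VF EF" and hom: "hom_map VF EF (blowV t) (blowE t) \<phi>"
  shows "\<exists>m\<ge>6. \<exists>GV GE. is_G2 m GV GE \<and> contained VF EF GV GE"
proof -
  have finV: "finite VF" using hF unfolding hg3_def by blast
  obtain idx :: "nat \<Rightarrow> nat" and K where idx: "idx ` VF = {i. i < K}" "inj_on idx VF"
    using finite_imp_inj_to_nat_seg[OF finV] by blast
  define s where "s = K + 1"
  have idxs: "idx v < s" if "v \<in> VF" for v
  proof -
    have "idx v \<in> {i. i < K}" unfolding idx(1)[symmetric] using that by (rule imageI)
    then show ?thesis unfolding s_def by simp
  qed
  define \<psi> where "\<psi> v = (fst (\<phi> v), idx v)" for v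
  have inj: "inj_on \<psi> VF" using idx(2) unfolding \<psi>_def inj_on_def by auto
  have Vsub: "\<psi> ` VF \<subseteq> blowV (\<lambda>_. s)"
  proof
    fix y assume "y \<in> \<psi> ` VF"
    then obtain v where v: "v \<in> VF" "y = \<psi> v" by blast
    have "\<phi> v \<in> blowV t" using hom v(1) unfolding hom_map_def by blast
    then have "fst (\<phi> v) \<in> {1..6}" unfolding blowV_def by auto
    then show "y \<in> blowV (\<lambda>_. s)" using idxs[OF v(1)] v(2) unfolding \<psi>_def blowV_def by auto
  qed
  have Esub: "\<psi> ` e \<in> blowE (\<lambda>_. s)" if e: "e \<in> EF" for e
  proof (rule blowE_intro)
    have eV: "e \<subseteq> VF" and ce: "card e = 3" using hF e unfolding hg3_def by auto
    show "\<psi> ` e \<subseteq> blowV (\<lambda>_. s)" using Vsub eV by blast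
    show "card (\<psi> ` e) = 3" using card_image[OF inj_on_subset[OF inj eV]] ce by simp
    have "\<phi> ` e \<in> blowE t" using hom e unfolding hom_map_def by blast
    then have "fst ` \<phi> ` e \<in> G26E" using blowE_imp by blast
    moreover have "fst ` \<psi> ` e = fst ` \<phi> ` e" unfolding \<psi>_def image_image by simp
    ultimately show "fst ` \<psi> ` e \<in> G26E" by simp
  qed
  have "is_G2 (6*s) (blowV (\<lambda>_. s)) (blowE (\<lambda>_. s))" by (rule G2_uniform) (simp add: s_def)
  moreover have "contained VF EF (blowV (\<lambda>_. s)) (blowE (\<lambda>_. s))"
    unfolding contained_def hom_map_def using inj Vsub Esub by blast
  moreover have "6*s \<ge> 6" by (simp add: s_def)
  ultimately show ?thesis by blast
qed

lemma hom_G1_contained: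
  fixes VF :: "nat set"
  assumes hF: "hg3 VF EF" and hom: "hom_map VF EF (G1V n) (G1E n) \<phi>"
  shows "\<exists>m\<ge>1. contained VF EF (G1V m) (G1E m)"
proof -
  have finV: "finite VF" using hF unfolding hg3_def by blast
  obtain idx :: "nat \<Rightarrow> nat" and K where idx: "idx ` VF = {i. i < K}" "inj_on idx VF"
    using finite_imp_inj_to_nat_seg[OF finV] by blast
  define s where "s = K + 1"
  have idxs: "idx v < s" if "v \<in> VF" for v
  proof -
    have "idx v \<in> {i. i < K}" unfolding idx(1)[symmetric] using that by (rule imageI)
    then show ?thesis unfolding s_def by simp
  qed
  define \<psi> where "\<psi> v = (if \<phi> v < n div 3 then idx v else s + idx v)" for v
  have m3: "(3*s) div 3 = s" by simp
  have inj: "inj_on \<psi> VF"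
  proof (rule inj_onI)
    fix x y assume xy: "x \<in> VF" "y \<in> VF" "\<psi> x = \<psi> y"
    then have "idx x = idx y" using idxs[OF xy(1)] idxs[OF xy(2)] unfolding \<psi>_def by (auto split: if_splits)
    then show "x = y" using idx(2) xy(1,2) unfolding inj_on_def by blast
  qed
  have Vsub: "\<psi> ` VF \<subseteq> G1V (3*s)"
    using idxs unfolding \<psi>_def G1V_def by (force simp: image_subset_iff)
  have Esub: "\<psi> ` e \<in> G1E (3*s)" if e: "e \<in> EF" for e
  proof -
    have eV: "e \<subseteq> VF" and ce: "card e = 3" using hF e unfolding hg3_def by auto
    have "\<phi> ` e \<in> G1E n" using hom e unfolding hom_map_def by blast
    then obtain a b b' where fe: "\<phi> ` e = {a,b,b'}" and ab: "a < n div 3" "n div 3 \<le> b" "b < n"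
      "n div 3 \<le> b'" "b' < n" "b \<noteq> b'" unfolding G1E_def by blast
    have "a \<in> \<phi> ` e" "b \<in> \<phi> ` e" "b' \<in> \<phi> ` e" unfolding fe by simp_all
    then obtain v w w' where vw: "v \<in> e" "w \<in> e" "w' \<in> e" "\<phi> v = a" "\<phi> w = b" "\<phi> w' = b'"
      by (metis imageE)
    have d: "v \<noteq> w" "v \<noteq> w'" "w \<noteq> w'" using vw ab by auto
    have "{v,w,w'} \<subseteq> e" using vw by simp
    moreover have "card {v,w,w'} = 3" using d by simp
    moreover have "finite e" using ce card.infinite by fastforce
    ultimately have e_eq: "e = {v,w,w'}" using ce by (metis card_subset_eq)
    have "\<psi> ` e = {idx v, s + idx w, s + idx w'}"
      unfolding e_eq \<psi>_def using vw ab by (simp add: insert_commute)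
    moreover have "idx v < 3*s div 3" using idxs vw eV m3 by auto
    moreover have "3*s div 3 \<le> s + idx w" "s + idx w < 3*s" "3*s div 3 \<le> s + idx w'" "s + idx w' < 3*s"
      using idxs vw eV m3 by fastforce+
    moreover have "s + idx w \<noteq> s + idx w'" using idx(2) vw(2,3) d(3) eV unfolding inj_on_def by auto
    ultimately show ?thesis unfolding G1E_def by blast
  qed
  have "contained VF EF (G1V (3*s)) (G1E (3*s))"
    unfolding contained_def hom_map_def using inj Vsub Esub by blast
  moreover have "3*s \<ge> 1" by (simp add: s_def)
  ultimately show ?thesis by blast
qed

lemma hom_inj_edge:
  assumes "hom_map VF EF V E f" "hg3 V E" "hg3 VF EF" "e \<in> EF"
  shows "inj_on f e"
proof -
  have "card e = 3" using assms(3,4) unfolding hg3_def by blast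
  moreover have "card (f ` e) = 3" using assms(1,2,4) unfolding hom_map_def hg3_def by blast
  moreover have "finite e" using \<open>card e = 3\<close> card.infinite by fastforce
  ultimately show ?thesis by (simp add: eq_card_imp_inj_on)
qed

lemma image_copy:
  fixes V :: "'a set" and VF :: "nat set" and f :: "nat \<Rightarrow> 'a"
  assumes hH: "hg3 V E" and hF: "hg3 VF EF" and hom: "hom_map VF EF V E f"
  obtains g :: "nat \<Rightarrow> nat" where "hom_map VF EF (g ` VF) ((`) g ` EF) g"
    "hg3 (g ` VF) ((`) g ` EF)" "contained (g ` VF) ((`) g ` EF) V E" "card (g ` VF) \<le> card VF"
proof -
  define W where "W = f ` VF"
  have finV: "finite VF" using hF unfolding hg3_def by blast
  then have finW: "finite W" unfolding W_def by simp
  obtain h :: "'a \<Rightarrow> nat" and K where h: "h ` W = {i. i < K}" "inj_on h W"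
    using finite_imp_inj_to_nat_seg[OF finW] by blast
  define g where "g = h \<circ> f"
  have 1: "hom_map VF EF (g ` VF) ((`) g ` EF) g" unfolding hom_map_def by blast
  have eV: "e \<subseteq> VF" if "e \<in> EF" for e using hF that unfolding hg3_def by blast
  have feW: "f ` e \<subseteq> W" if "e \<in> EF" for e using eV[OF that] unfolding W_def by blast
  have 2: "hg3 (g ` VF) ((`) g ` EF)"
    unfolding hg3_def
  proof (intro conjI ballI)
    show "finite (g ` VF)" using finV by simp
    fix e' assume "e' \<in> (`) g ` EF"
    then obtain e where e: "e \<in> EF" "e' = g ` e" by blast
    show "e' \<subseteq> g ` VF" using eV[OF e(1)] e(2) by blast
    have "card (f ` e) = 3" using hom hH e(1) unfolding hom_map_def hg3_def by blast
    moreover have "g ` e = h ` (f ` e)" unfolding g_def by (simp add: image_comp)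
    moreover have "card (h ` (f ` e)) = card (f ` e)" using card_image[OF inj_on_subset[OF h(2) feW[OF e(1)]]] .
    ultimately show "card e' = 3" using e(2) by simp
  qed
  define k where "k = inv_into W h"
  have gV: "g ` VF = h ` W" unfolding g_def W_def by (simp add: image_comp)
  have 3: "contained (g ` VF) ((`) g ` EF) V E"
    unfolding contained_def hom_map_def
  proof (intro exI conjI ballI)
    show "inj_on k (g ` VF)" unfolding gV k_def by (rule inj_on_inv_into) simp
    show "k ` g ` VF \<subseteq> V" unfolding gV k_def using inv_into_image_cancel[OF h(2) subset_refl] hom
      unfolding W_def hom_map_def by simp
    fix e' assume "e' \<in> (`) g ` EF"
    then obtain e where e: "e \<in> EF" "e' = g ` e" by blast
    have "k ` e' = f ` e" unfolding e(2) k_def g_def image_comp[symmetric]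
      by (rule inv_into_image_cancel[OF h(2) feW[OF e(1)]])
    then show "k ` e' \<in> E" using hom e(1) unfolding hom_map_def by simp
  qed
  have 4: "card (g ` VF) \<le> card VF" using finV by (rule card_image_le)
  show ?thesis using that 1 2 3 4 by blast
qed

lemma core_transfer:
  fixes VF :: "nat set" and g :: "nat \<Rightarrow> nat"
  assumes hF: "hg3 VF EF" and hG: "hg3 (g ` VF) ((`) g ` EF)" and core: "is_core VF EF k S"
  shows "inj_on g S" "is_core (g ` VF) ((`) g ` EF) k (g ` S)"
proof -
  have hom: "hom_map VF EF (g ` VF) ((`) g ` EF) g" unfolding hom_map_def by blast
  show inj: "inj_on g S"
  proof (rule inj_onI, rule ccontr)
    fix x y assume xy: "x \<in> S" "y \<in> S" "g x = g y" "x \<noteq> y"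
    then obtain e where e: "e \<in> EF" "x \<in> e" "y \<in> e" using core unfolding is_core_def by blast
    have "inj_on g e" using hom_inj_edge[OF hom hG hF e(1)] .
    then show False using xy e unfolding inj_on_def by blast
  qed
  show "is_core (g ` VF) ((`) g ` EF) k (g ` S)"
    unfolding is_core_def
  proof (intro conjI ballI impI)
    show "g ` S \<subseteq> g ` VF" using core unfolding is_core_def by blast
    show "card (g ` S) = k" using card_image[OF inj] core unfolding is_core_def by simp
    fix x' y' assume "x' \<in> g ` S" "y' \<in> g ` S" "x' \<noteq> y'"
    then obtain x y where xy: "x \<in> S" "y \<in> S" "x' = g x" "y' = g y" "x \<noteq> y" by blast
    then obtain e where e: "e \<in> EF" "x \<in> e" "y \<in> e" using core unfolding is_core_def by blast
    show "\<exists>e'\<in>(`) g ` EF. x' \<in> e' \<and> y' \<in> e'" using e xy by blast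
  qed
qed

lemma inK_transfer:
  fixes VF :: "nat set" and g :: "nat \<Rightarrow> nat"
  assumes K: "inK k VF EF" and hG: "hg3 (g ` VF) ((`) g ` EF)" and c: "card (g ` VF) \<le> card VF"
    and core: "is_core VF EF k S"
  shows "inK k (g ` VF) ((`) g ` EF)"
proof -
  have hF: "hg3 VF EF" using K unfolding inK_def by blast
  show ?thesis using core_transfer(2)[OF hF hG core] hG c K unfolding inK_def by fastforce
qed

lemma tn_ge2_iff:
  assumes fin: "finite S" and F: "\<forall>e\<in>F. e \<subseteq> S \<and> e \<noteq> {}"
  shows "transversal_number S F \<ge> 2 \<longleftrightarrow> (\<forall>T. T \<subseteq> S \<and> card T \<le> 1 \<longrightarrow> (\<exists>e\<in>F. T \<inter> e = {}))"
proof -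
  define C where "C = {card T | T. T \<subseteq> S \<and> (\<forall>e\<in>F. T \<inter> e \<noteq> {})}"
  have "C \<subseteq> {..card S}"
  proof
    fix c assume "c \<in> C"
    then obtain T where "c = card T" "T \<subseteq> S" unfolding C_def by blast
    then show "c \<in> {..card S}" using card_mono[OF fin] by simp
  qed
  then have finC: "finite C" by (rule finite_subset) simp
  have "\<forall>e\<in>F. S \<inter> e \<noteq> {}"
  proof
    fix e assume "e \<in> F"
    then have "e \<subseteq> S" "e \<noteq> {}" using F by auto
    then show "S \<inter> e \<noteq> {}" by (simp add: Int_absorb1)
  qed
  then have "card S \<in> C" unfolding C_def by blast
  then have neC: "C \<noteq> {}" by blast
  have "transversal_number S F = Min C" unfolding transversal_number_def C_def by simp
  then have "transversal_number S F \<ge> 2 \<longleftrightarrow> (\<forall>c\<in>C. 2 \<le> c)" using Min_ge_iff[OF finC neC] by simp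
  also have "\<dots> \<longleftrightarrow> (\<forall>T. T \<subseteq> S \<and> card T \<le> 1 \<longrightarrow> (\<exists>e\<in>F. T \<inter> e = {}))"
  proof
    assume a: "\<forall>c\<in>C. 2 \<le> c"
    show "\<forall>T. T \<subseteq> S \<and> card T \<le> 1 \<longrightarrow> (\<exists>e\<in>F. T \<inter> e = {})"
    proof (intro allI impI, rule ccontr)
      fix T assume T: "T \<subseteq> S \<and> card T \<le> 1" "\<not> (\<exists>e\<in>F. T \<inter> e = {})"
      then have "card T \<in> C" unfolding C_def by blast
      then show False using a T(1) by fastforce
    qed
  next
    assume a: "\<forall>T. T \<subseteq> S \<and> card T \<le> 1 \<longrightarrow> (\<exists>e\<in>F. T \<inter> e = {})"
    show "\<forall>c\<in>C. 2 \<le> c"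
    proof
      fix c assume "c \<in> C"
      then obtain T where T: "c = card T" "T \<subseteq> S" "\<forall>e\<in>F. T \<inter> e \<noteq> {}" unfolding C_def by blast
      show "2 \<le> c"
      proof (rule ccontr)
        assume "\<not> 2 \<le> c"
        then have "card T \<le> 1" using T(1) by simp
        then obtain e where "e \<in> F" "T \<inter> e = {}" using a T(2) by blast
        then show False using T(3) by blast
      qed
    qed
  qed
  finally show ?thesis .
qed

lemma induced_ok:
  assumes "hg3 V E" "S \<subseteq> V"
  shows "finite S" "\<forall>e\<in>induced_edges E S. e \<subseteq> S \<and> e \<noteq> {}"
proof -
  show "finite S" using assms unfolding hg3_def using finite_subset by blast
  show "\<forall>e\<in>induced_edges E S. e \<subseteq> S \<and> e \<noteq> {}"
  proof
    fix e assume "e \<in> induced_edges E S"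
    then have "e \<in> E" "e \<subseteq> S" unfolding induced_edges_def by auto
    moreover have "card e = 3" using assms(1) \<open>e \<in> E\<close> unfolding hg3_def by blast
    ultimately show "e \<subseteq> S \<and> e \<noteq> {}" by auto
  qed
qed

lemma tn_transfer:
  fixes VF :: "nat set" and g :: "nat \<Rightarrow> nat"
  assumes hF: "hg3 VF EF" and hG: "hg3 (g ` VF) ((`) g ` EF)" and core: "is_core VF EF k S"
    and tn: "transversal_number S (induced_edges EF S) \<ge> 2"
  shows "transversal_number (g ` S) (induced_edges ((`) g ` EF) (g ` S)) \<ge> 2"
proof -
  have SV: "S \<subseteq> VF" using core unfolding is_core_def by blast
  have inj: "inj_on g S" by (rule core_transfer(1)[OF hF hG core])
  note ok1 = induced_ok[OF hF SV]
  have SV': "g ` S \<subseteq> g ` VF" using SV by blast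
  note ok2 = induced_ok[OF hG SV']
  have A: "\<forall>T. T \<subseteq> S \<and> card T \<le> 1 \<longrightarrow> (\<exists>e\<in>induced_edges EF S. T \<inter> e = {})"
    using tn tn_ge2_iff[OF ok1] by blast
  have "\<forall>T'. T' \<subseteq> g ` S \<and> card T' \<le> 1 \<longrightarrow> (\<exists>e'\<in>induced_edges ((`) g ` EF) (g ` S). T' \<inter> e' = {})"
  proof (intro allI impI, rule ccontr)
    fix T' assume T': "T' \<subseteq> g ` S \<and> card T' \<le> 1"
      and hit: "\<not> (\<exists>e'\<in>induced_edges ((`) g ` EF) (g ` S). T' \<inter> e' = {})"
    define T where "T = S \<inter> g -` T'"
    have finT': "finite T'" using T' ok2(1) finite_subset by blast
    have "g ` T \<subseteq> T'" unfolding T_def by blast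
    moreover have "card (g ` T) = card T" by (rule card_image[OF inj_on_subset[OF inj]]) (simp add: T_def)
    ultimately have "card T \<le> card T'" using card_mono[OF finT'] by metis
    then have "card T \<le> 1" using T' by linarith
    moreover have "T \<subseteq> S" unfolding T_def by blast
    ultimately obtain e where e: "e \<in> induced_edges EF S" "T \<inter> e = {}" using A by blast
    have eS: "e \<subseteq> S" "e \<in> EF" using e(1) unfolding induced_edges_def by auto
    have "g ` e \<in> induced_edges ((`) g ` EF) (g ` S)" using eS unfolding induced_edges_def by blast
    then have "T' \<inter> g ` e \<noteq> {}" using hit by blast
    then obtain x where "x \<in> e" "g x \<in> T'" by blast
    then have "x \<in> T \<inter> e" using eS unfolding T_def by blast
    then show False using e(2) by blast
  qed
  then show ?thesis using tn_ge2_iff[OF ok2] by blast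
qed

lemma K5_pair:
  assumes K: "is_K5minus VF EF" and xy: "x \<in> VF" "y \<in> VF" "x \<noteq> y"
  shows "\<exists>e\<in>EF. x \<in> e \<and> y \<in> e"
proof -
  obtain t where t: "t \<subseteq> VF" "card t = 3" and EF: "EF = {e. e \<subseteq> VF \<and> card e = 3} - {t}"
    and c5: "card VF = 5" using K unfolding is_K5minus_def by blast
  have finV: "finite VF" using c5 card.infinite by fastforce
  have "card (VF - {x,y}) = 3" using c5 xy finV by (simp add: card_Diff_subset)
  then obtain z1 z2 z3 where z: "VF - {x,y} = {z1,z2,z3}" "z1 \<noteq> z2" "z1 \<noteq> z3" "z2 \<noteq> z3"
    by (auto simp: card_3_iff)
  have zin: "z1 \<in> VF - {x,y}" "z2 \<in> VF - {x,y}" unfolding z(1) by simp_all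
  have c1: "card {x,y,z1} = 3" using zin xy by auto
  have c2: "card {x,y,z2} = 3" using zin xy by auto
  have ne: "{x,y,z1} \<noteq> {x,y,z2}"
  proof
    assume "{x,y,z1} = {x,y,z2}"
    then have "z1 \<in> {x,y,z2}" by (metis insertI1 insertI2)
    then show False using zin z(2) by auto
  qed
  have "{x,y,z1} \<noteq> t \<or> {x,y,z2} \<noteq> t" using ne by blast
  then show ?thesis
  proof
    assume "{x,y,z1} \<noteq> t"
    then have "{x,y,z1} \<in> EF" unfolding EF using c1 zin xy by auto
    then show ?thesis by blast
  next
    assume "{x,y,z2} \<noteq> t"
    then have "{x,y,z2} \<in> EF" unfolding EF using c2 zin xy by auto
    then show ?thesis by blast
  qed
qed

lemma calM_hg3: "(VF, EF) \<in> calM \<Longrightarrow> hg3 VF EF"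
  unfolding calM_def calM1_def calM2_def calM3_def by (auto simp: is_K5minus_def inK_def)

theorem lemma3p2:
  fixes V :: "'a set" and E :: "'a set set"
  assumes "hg3 V E"
  shows "family_free calM V E \<longleftrightarrow> family_hom_free calM V E"
proof
  assume hf: "family_hom_free calM V E"
  show "family_free calM V E"
    unfolding family_free_def
  proof (clarify)
    fix VF EF assume mem: "(VF, EF) \<in> calM" and c: "contained VF EF V E"
    then obtain f where "hom_map VF EF V E f" unfolding contained_def by blast
    then show False using hf mem unfolding family_hom_free_def by blast
  qed
next
  assume free: "family_free calM V E"
  show "family_hom_free calM V E"
    unfolding family_hom_free_def
  proof (clarify)
    fix VF EF f assume mem: "(VF, EF) \<in> calM" and hom: "hom_map VF EF V E f"
    have nc: "\<not> contained VF' EF' V E" if "(VF', EF') \<in> calM" for VF' EF'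
      using free that unfolding family_free_def by blast
    have hF: "hg3 VF EF" using mem by (rule calM_hg3)
    obtain g :: "nat \<Rightarrow> nat" where g: "hom_map VF EF (g ` VF) ((`) g ` EF) g"
      "hg3 (g ` VF) ((`) g ` EF)" "contained (g ` VF) ((`) g ` EF) V E" "card (g ` VF) \<le> card VF"
      using image_copy[OF assms hF hom] by blast
    from mem consider "(VF, EF) \<in> calM1" | "(VF, EF) \<in> calM2" | "(VF, EF) \<in> calM3"
      unfolding calM_def by blast
    then show False
    proof cases
      case 1
      then have K: "is_K5minus VF EF" unfolding calM1_def by simp
      have "inj_on f VF"
      proof (rule inj_onI, rule ccontr)
        fix x y assume xy: "x \<in> VF" "y \<in> VF" "f x = f y" "x \<noteq> y"
        then obtain e where e: "e \<in> EF" "x \<in> e" "y \<in> e" using K5_pair[OF K] by blast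
        have "inj_on f e" by (rule hom_inj_edge[OF hom assms hF e(1)])
        then show False using xy e unfolding inj_on_def by blast
      qed
      then have "contained VF EF V E" using hom unfolding contained_def by blast
      then show False using nc mem by blast
    next
      case 2
      then obtain S where K: "inK 7 VF EF" and core: "is_core VF EF 7 S"
        and tn: "transversal_number S (induced_edges EF S) \<ge> 2" unfolding calM2_def by blast
      have "(g ` VF, (`) g ` EF) \<in> calM2"
        unfolding calM2_def
        using inK_transfer[OF K g(2) g(4) core] core_transfer(2)[OF hF g(2) core]
          tn_transfer[OF hF g(2) core tn] by blast
      then show False using nc g(3) unfolding calM_def by blast
    next
      case 3
      then have K: "inK 6 VF EF"
        and n1: "\<not> (\<exists>n\<ge>1. contained VF EF (G1V n) (G1E n))"
        and n2: "\<not> (\<exists>n\<ge>6. \<exists>GV GE. is_G2 n GV GE \<and> contained VF EF GV GE)"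
        unfolding calM3_def by blast+
      obtain S where core: "is_core VF EF 6 S" using K unfolding inK_def by blast
      have K': "inK 6 (g ` VF) ((`) g ` EF)" by (rule inK_transfer[OF K g(2) g(4) core])
      have m1: "\<not> (\<exists>n\<ge>1. contained (g ` VF) ((`) g ` EF) (G1V n) (G1E n))"
      proof
        assume "\<exists>n\<ge>1. contained (g ` VF) ((`) g ` EF) (G1V n) (G1E n)"
        then obtain n \<psi> where "n \<ge> 1" "inj_on \<psi> (g ` VF)" "hom_map (g ` VF) ((`) g ` EF) (G1V n) (G1E n) \<psi>"
          unfolding contained_def by blast
        then have "hom_map VF EF (G1V n) (G1E n) (\<psi> \<circ> g)"
          unfolding hom_map_def image_comp[symmetric] by blast
        from hom_G1_contained[OF hF this] show False using n1 by blast
      qed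
      have m2: "\<not> (\<exists>n\<ge>6. \<exists>GV GE. is_G2 n GV GE \<and> contained (g ` VF) ((`) g ` EF) GV GE)"
      proof
        assume "\<exists>n\<ge>6. \<exists>GV GE. is_G2 n GV GE \<and> contained (g ` VF) ((`) g ` EF) GV GE"
        then obtain n GV GE \<psi> where G: "is_G2 n GV GE" and "inj_on \<psi> (g ` VF)"
          and h: "hom_map (g ` VF) ((`) g ` EF) GV GE \<psi>"
          unfolding contained_def by blast
        obtain t where "GV = blowV t" "GE = blowE t" using G unfolding is_G2_def by blast
        then have "hom_map VF EF (blowV t) (blowE t) (\<psi> \<circ> g)"
          using h unfolding hom_map_def image_comp[symmetric] by blast
        from hom_G2_contained[OF hF this] show False using n2 by blast
      qed
      have "(g ` VF, (`) g ` EF) \<in> calM3" unfolding calM3_def using K' m1 m2 by blast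
      then show False using nc g(3) unfolding calM_def by blast
    qed
  qed
qed
end
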